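(* Let $\Gamma=\mathsf{PSL}_2(\mathbb{Z})=\langle U,S\mid U^3,S^2\rangle$, with $U$ of order $3$ and $S$ of order $2$. Let $\mathcal{W}$ be the set of nonempty words in the alphabet $\{U,S\}$ that are equal to the identity in $\Gamma$ and contain no factor $SS$. Below, $B$ denotes an arbitrary nonempty word over $\{U,S\}$, and for $n,m\ge 0$ each function counts the words in $\mathcal{W}$ having exactly $n$ letters $U$ and $m$ letters $S$ and having the indicated form: - $a(n,m)$: words of the form $SUBUS$; - $b(n,m)$: words of the form $U^\alpha SBSU^\beta$ with $\alpha,\beta>0$, $\alpha+\beta\equiv0\pmod 3$, or of the form $U^\gamma$ with $\gamma>0$, $\gamma\equiv 0\pmod 3$; - $c(n,m)$: words of the form $U^\alpha SBS$ or $SBSU^\alpha$ with $\alpha>0$, $\alpha\equiv0\pmod3$; - $d(n,m)$: words of the form $U^\alpha SBSU^\beta$ with $\alpha,\beta>0$, $\alpha+\beta\equiv 2\pmod 3$; - $e(n,m)$: words of the form $U^\alpha SBSU^\beta$ with $\alpha,\beta>0$, $\alpha+\beta\equiv1\pmod3$; - $f(n,m)$: words of the form $SBSU^\alpha$ or $U^\alpha SBS$ with $\alpha\equiv1\pmod3$; - $g(n,m)$: words of the form $SBSU^\alpha$ or $U^\alpha SBS$ with $\alpha\equiv2\pmod3$; - $\mathfrak d(n,m)$: words of the form $USBSU$; - $\mathfrak f(n,m)$: words of the form $SBSU$. All these functions are taken to be $0$ if an argument is negative. Then for all $n,m\ge0$: $$a(3n,2m)=b(3n,2m-2)+d(3n,2m-2)+e(3n,2m-2),$$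 $$b(3n,2m)=\sum_{k\ge1}(3k-1)\,a(3n-3k,2m)\ \text{ for } m\ge1,\qquad b(3n,0)=1\ \text{ for } n>0,$$ $$c(3n,2m)=2\sum_{k\ge1}a(3n-3k,2m),$$ $$d(3n,2m)=\sum_{k\ge0}(3k+1)\,\mathfrak d(3n-3k,2m),$$ $$e(3n,2m)=\sum_{k\ge1}3k\,\mathfrak f(3n-3k,2m),$$ $$f(3n,2m)=2\sum_{k\ge0}\mathfrak f(3n-3k,2m),$$ $$g(3n,2m)=2\sum_{k\ge0}\mathfrak d(3n-3k,2m).$$
   Context: Words are finite sequences over $\{U,S\}$ read as products in $\Gamma$; exponents $U^\alpha$ denote $\alpha$ consecutive letters $U$. *)

theory Defs
  imports Main
begin

datatype letter = U | S

text \<open>An element of SL_2(Z) is represented by its entries (a,b,c,d)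
  for the matrix [[a,b],[c,d]]; a word is trivial in PSL_2(Z) iff its matrix is +I or -I.
  Generators: S = [[0,-1],[1,0]] (order 2 in PSL_2(Z)), U = S T = [[0,-1],[1,1]] (order 3),
  the standard generators realising PSL_2(Z) = < U, S | U^3, S^2 >.\<close>

type_synonym mat2 = "int \<times> int \<times> int \<times> int"

fun mmul :: "mat2 \<Rightarrow> mat2 \<Rightarrow> mat2" where
  "mmul (a,b,c,d) (e,f,g,h) = (a*e + b*g, a*f + b*h, c*e + d*g, c*f + d*h)"

definition mat_id :: mat2 where "mat_id = (1,0,0,1)"

fun letter_mat :: "letter \<Rightarrow> mat2" where
  "letter_mat U = (0,-1,1,1)"
| "letter_mat S = (0,-1,1,0)"

definition word_mat :: "letter list \<Rightarrow> mat2" where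
  "word_mat w = foldr (\<lambda>l M. mmul (letter_mat l) M) w mat_id"

definition trivial_in_Gamma :: "letter list \<Rightarrow> bool" where
  "trivial_in_Gamma w \<longleftrightarrow> word_mat w = (1,0,0,1) \<or> word_mat w = (-1,0,0,-1)"

definition Uexp :: "nat \<Rightarrow> letter list" where "Uexp k = replicate k U"

definition Wset :: "letter list set" where
  "Wset = {w. w \<noteq> [] \<and> trivial_in_Gamma w \<and> \<not> (\<exists>xs ys. w = xs @ [S,S] @ ys)}"

definition cnt :: "(letter list \<Rightarrow> bool) \<Rightarrow> int \<Rightarrow> int \<Rightarrow> nat" where
  "cnt P n m = (if n < 0 \<or> m < 0 then 0 else
     card {w \<in> Wset. int (count_list w U) = n \<and> int (count_list w S) = m \<and> P w})"

definition form_a :: "letter list \<Rightarrow> bool" where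
  "form_a w \<longleftrightarrow> (\<exists>B. B \<noteq> [] \<and> w = [S,U] @ B @ [U,S])"

definition form_b :: "letter list \<Rightarrow> bool" where
  "form_b w \<longleftrightarrow>
     (\<exists>B \<alpha> \<beta>. B \<noteq> [] \<and> \<alpha> > 0 \<and> \<beta> > 0 \<and> (\<alpha> + \<beta>) mod 3 = 0 \<and>
        w = Uexp \<alpha> @ [S] @ B @ [S] @ Uexp \<beta>)
   \<or> (\<exists>\<gamma>. \<gamma> > 0 \<and> \<gamma> mod 3 = 0 \<and> w = Uexp \<gamma>)"

definition form_c :: "letter list \<Rightarrow> bool" where
  "form_c w \<longleftrightarrow> (\<exists>B \<alpha>. B \<noteq> [] \<and> \<alpha> > 0 \<and> \<alpha> mod 3 = 0 \<and>
     (w = Uexp \<alpha> @ [S] @ B @ [S] \<or> w = [S] @ B @ [S] @ Uexp \<alpha>))"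

definition form_d :: "letter list \<Rightarrow> bool" where
  "form_d w \<longleftrightarrow> (\<exists>B \<alpha> \<beta>. B \<noteq> [] \<and> \<alpha> > 0 \<and> \<beta> > 0 \<and> (\<alpha> + \<beta>) mod 3 = 2 \<and>
        w = Uexp \<alpha> @ [S] @ B @ [S] @ Uexp \<beta>)"

definition form_e :: "letter list \<Rightarrow> bool" where
  "form_e w \<longleftrightarrow> (\<exists>B \<alpha> \<beta>. B \<noteq> [] \<and> \<alpha> > 0 \<and> \<beta> > 0 \<and> (\<alpha> + \<beta>) mod 3 = 1 \<and>
        w = Uexp \<alpha> @ [S] @ B @ [S] @ Uexp \<beta>)"

definition form_f :: "letter list \<Rightarrow> bool" where
  "form_f w \<longleftrightarrow> (\<exists>B \<alpha>. B \<noteq> [] \<and> \<alpha> mod 3 = 1 \<and>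
     (w = [S] @ B @ [S] @ Uexp \<alpha> \<or> w = Uexp \<alpha> @ [S] @ B @ [S]))"

definition form_g :: "letter list \<Rightarrow> bool" where
  "form_g w \<longleftrightarrow> (\<exists>B \<alpha>. B \<noteq> [] \<and> \<alpha> mod 3 = 2 \<and>
     (w = [S] @ B @ [S] @ Uexp \<alpha> \<or> w = Uexp \<alpha> @ [S] @ B @ [S]))"

definition form_dfrak :: "letter list \<Rightarrow> bool" where
  "form_dfrak w \<longleftrightarrow> (\<exists>B. B \<noteq> [] \<and> w = [U,S] @ B @ [S,U])"

definition form_ffrak :: "letter list \<Rightarrow> bool" where
  "form_ffrak w \<longleftrightarrow> (\<exists>B. B \<noteq> [] \<and> w = [S] @ B @ [S,U])"

definition ca :: "int \<Rightarrow> int \<Rightarrow> nat" where "ca = cnt form_a"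
definition cb :: "int \<Rightarrow> int \<Rightarrow> nat" where "cb = cnt form_b"
definition cc :: "int \<Rightarrow> int \<Rightarrow> nat" where "cc = cnt form_c"
definition cd :: "int \<Rightarrow> int \<Rightarrow> nat" where "cd = cnt form_d"
definition ce :: "int \<Rightarrow> int \<Rightarrow> nat" where "ce = cnt form_e"
definition cf :: "int \<Rightarrow> int \<Rightarrow> nat" where "cf = cnt form_f"
definition cg :: "int \<Rightarrow> int \<Rightarrow> nat" where "cg = cnt form_g"
definition cdfrak :: "int \<Rightarrow> int \<Rightarrow> nat" where "cdfrak = cnt form_dfrak"
definition cffrak :: "int \<Rightarrow> int \<Rightarrow> nat" where "cffrak = cnt form_ffrak"

end

theory Submission
  imports Defs
begin



fun nss :: "letter list \<Rightarrow> bool" where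
  "nss [] = True"
| "nss [x] = True"
| "nss (x # y # r) = (\<not>(x = S \<and> y = S) \<and> nss (y # r))"

lemma nss_iff: "nss w \<longleftrightarrow> \<not> (\<exists>xs ys. w = xs @ [S,S] @ ys)"
proof (induction w rule: nss.induct)
  case (3 x y r)
  show ?case
  proof
    assume h: "nss (x # y # r)"
    show "\<not> (\<exists>xs ys. x # y # r = xs @ [S,S] @ ys)"
    proof
      assume "\<exists>xs ys. x # y # r = xs @ [S,S] @ ys"
      then obtain xs ys where e: "x # y # r = xs @ [S,S] @ ys" by blast
      show False
      proof (cases xs)
        case Nil then show ?thesis using e h by simp
      next
        case (Cons a xs') then have "y # r = xs' @ [S,S] @ ys" using e by simp
        moreover have "nss (y#r)" using h by simp
        ultimately show ?thesis using 3 by blast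
      qed
    qed
  next
    assume h: "\<not> (\<exists>xs ys. x # y # r = xs @ [S,S] @ ys)"
    have a: "\<not>(x = S \<and> y = S)" using h by (metis append_Nil append_Cons)
    have "\<not> (\<exists>xs ys. y # r = xs @ [S,S] @ ys)"
    proof
      assume "\<exists>xs ys. y # r = xs @ [S,S] @ ys"
      then obtain xs ys where "y # r = xs @ [S,S] @ ys" by blast
      then have "x # y # r = (x#xs) @ [S,S] @ ys" by simp
      then show False using h by blast
    qed
    then show "nss (x # y # r)" using a 3 by simp
  qed
qed auto

lemma Wset_iff: "w \<in> Wset \<longleftrightarrow> w \<noteq> [] \<and> trivial_in_Gamma w \<and> nss w"
  by (simp add: Wset_def nss_iff)

lemma nss_Cons_U[simp]: "nss (U # ys) = nss ys"
  by (cases ys) auto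

lemma nss_app_U: "nss (xs @ U # ys) \<longleftrightarrow> nss xs \<and> nss ys"
proof (induction xs rule: nss.induct)
  case (2 x) then show ?case by (cases ys) auto
qed auto

lemma nss_SS[simp]: "nss (xs @ S # S # ys) = False"
  by (simp add: nss_iff) (metis append_Cons append_Nil)

lemma Uexp_0[simp]: "Uexp 0 = []" by (simp add: Uexp_def)
lemma Uexp_Suc: "Uexp (Suc a) = U # Uexp a" by (simp add: Uexp_def)
lemma Uexp_Suc': "Uexp (Suc a) = Uexp a @ [U]" by (simp add: Uexp_def replicate_append_same)
lemma Uexp_add: "Uexp (a + b) = Uexp a @ Uexp b" by (simp add: Uexp_def replicate_add)
lemma count_Uexp[simp]: "count_list (Uexp a) U = a" "count_list (Uexp a) S = 0"
  by (induction a) (auto simp: Uexp_def)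
lemma set_Uexp: "S \<notin> set (Uexp a)" by (simp add: Uexp_def)
lemma Uexp_eq_Nil[simp]: "Uexp a = [] \<longleftrightarrow> a = 0" by (simp add: Uexp_def)

lemma nss_Uexp_left[simp]: "nss (Uexp a @ ys) = nss ys"
  by (induction a) (auto simp: Uexp_Suc)

lemma nss_Uexp[simp]: "nss (Uexp a)"
  by (induction a) (auto simp: Uexp_Suc)

lemma nss_Uexp_right[simp]: "nss (ys @ Uexp a) = nss ys"
proof (induction a)
  case (Suc a) then show ?case by (simp add: Uexp_Suc nss_app_U)
qed simp


lemma nss_S_block: "nss ([S] @ B @ [S]) \<longleftrightarrow> B \<noteq> [] \<and> nss B \<and> hd B = U \<and> last B = U"
proof (cases B rule: rev_cases)
  case Nil then show ?thesis by simp
next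
  case (snoc ys y)
  then show ?thesis
  proof (cases y)
    case U
    then show ?thesis using snoc
      apply (cases ys) apply simp
      subgoal for a l by (cases a) (auto simp: nss_app_U)
      done
  next
    case S
    then show ?thesis using snoc by (simp) (metis append_Cons append_Nil nss_SS)
  qed
qed




lemma mmul_assoc: "mmul (mmul A B) C = mmul A (mmul B C)"
  by (cases A; cases B; cases C) (simp add: algebra_simps)

lemma mmul_id[simp]: "mmul mat_id A = A" "mmul A mat_id = A"
  by (cases A, simp add: mat_id_def)+

lemma word_mat_Nil[simp]: "word_mat [] = mat_id" by (simp add: word_mat_def)
lemma word_mat_Cons[simp]: "word_mat (l # w) = mmul (letter_mat l) (word_mat w)"
  by (simp add: word_mat_def)
lemma word_mat_append: "word_mat (xs @ ys) = mmul (word_mat xs) (word_mat ys)"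
  by (induction xs) (simp_all add: mmul_assoc)

fun mdet :: "mat2 \<Rightarrow> int" where "mdet (a,b,c,d) = a*d - b*c"

lemma mdet_mmul: "mdet (mmul A B) = mdet A * mdet B"
  by (cases A; cases B) (simp add: algebra_simps)

lemma mdet_word: "mdet (word_mat w) = 1"
proof (induction w)
  case Nil then show ?case by (simp add: mat_id_def)
next
  case (Cons l w) then show ?case by (cases l) (simp_all add: mdet_mmul)
qed

lemma swap_aux:
  fixes a b c d p q r s e :: int
  assumes det: "a*d - b*c = 1"
  and h1: "a*p + b*r = e" and h2: "a*q + b*s = 0" and h3: "c*p + d*r = 0" and h4: "c*q + d*s = e"
  shows "p*a + q*c = e \<and> p*b + q*d = 0 \<and> r*a + s*c = 0 \<and> r*b + s*d = e"
proof -
  have p: "p = d*e" proof -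
    have "p = p*(a*d - b*c)" using det by simp
    also have "\<dots> = d*(a*p+b*r) - b*(c*p+d*r)" by (simp add: algebra_simps)
    finally show ?thesis using h1 h3 by simp
  qed
  have q: "q = - b*e" proof -
    have "q = q*(a*d - b*c)" using det by simp
    also have "\<dots> = d*(a*q+b*s) - b*(c*q+d*s)" by (simp add: algebra_simps)
    finally show ?thesis using h2 h4 by simp
  qed
  have r: "r = - c*e" proof -
    have "r = r*(a*d - b*c)" using det by simp
    also have "\<dots> = a*(c*p+d*r) - c*(a*p+b*r)" by (simp add: algebra_simps)
    finally show ?thesis using h1 h3 by simp
  qed
  have s: "s = a*e" proof -
    have "s = s*(a*d - b*c)" using det by simp
    also have "\<dots> = a*(c*q+d*s) - c*(a*q+b*s)" by (simp add: algebra_simps)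
    finally show ?thesis using h2 h4 by simp
  qed
  have "p*a + q*c = e*(a*d-b*c)" "r*b + s*d = e*(a*d - b*c)" using p q r s by (simp_all add: algebra_simps)
  then show ?thesis using p q r s det by (simp add: algebra_simps)
qed

lemma triv_mat: "trivial_in_Gamma w \<longleftrightarrow> (\<exists>e. (e = 1 \<or> e = -1) \<and> word_mat w = (e,0,0,e))"
  unfolding trivial_in_Gamma_def by auto

lemma triv_swap: "trivial_in_Gamma (X @ Y) \<longleftrightarrow> trivial_in_Gamma (Y @ X)"
proof -
  have *: "trivial_in_Gamma (Y @ X)" if "trivial_in_Gamma (X @ Y)" for X Y
  proof -
    have "\<exists>e. (e = 1 \<or> e = -1) \<and> mmul (word_mat X) (word_mat Y) = (e,0,0,e)"
      using that by (simp only: triv_mat word_mat_append)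
    then obtain e where e: "e = 1 \<or> e = -1" "mmul (word_mat X) (word_mat Y) = (e,0,0,e)"
      by (elim exE conjE) simp
    obtain a b c d where A: "word_mat X = (a,b,c,d)" by (metis prod_cases4)
    obtain p q r s where B: "word_mat Y = (p,q,r,s)" by (metis prod_cases4)
    have det: "a*d - b*c = 1" using mdet_word[of X] A by simp
    from e(2) have "a*p + b*r = e" "a*q + b*s = 0" "c*p + d*r = 0" "c*q + d*s = e"
      by (simp_all add: A B)
    from swap_aux[OF det this] have "mmul (word_mat Y) (word_mat X) = (e,0,0,e)"
      by (simp add: A B)
    then show ?thesis using e(1) by (auto simp: triv_mat word_mat_append)
  qed
  show ?thesis using *[of X Y] *[of Y X] by blast
qed

lemma word_mat_U3k: "word_mat (Uexp (3*k)) = ((-1)^k, 0, 0, (-1)^k)"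
proof (induction k)
  case 0 then show ?case by (simp add: mat_id_def)
next
  case (Suc k)
  have "Uexp (3 * Suc k) = [U,U,U] @ Uexp (3*k)"
    by (simp add: Uexp_def numeral_3_eq_3)
  then show ?case using Suc by (simp add: word_mat_append mat_id_def)
qed

lemma triv_scale:
  assumes "word_mat Z = (e,0,0,e)" "e = 1 \<or> e = -1"
  shows "trivial_in_Gamma (w @ Z) \<longleftrightarrow> trivial_in_Gamma w"
proof -
  obtain a b c d where A: "word_mat w = (a,b,c,d)" by (metis prod_cases4)
  have "word_mat (w @ Z) = (e*a, e*b, e*c, e*d)" using assms A
    by (simp add: word_mat_append algebra_simps)
  then show ?thesis using assms(2) A unfolding trivial_in_Gamma_def by auto
qed

lemma triv_U3_right: "trivial_in_Gamma (w @ Uexp (3*k)) \<longleftrightarrow> trivial_in_Gamma w"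
proof (rule triv_scale[OF word_mat_U3k])
  show "(-1::int)^k = 1 \<or> (-1::int)^k = -1"
    by (induction k) auto
qed

lemma triv_U3_left: "trivial_in_Gamma (Uexp (3*k) @ w) \<longleftrightarrow> trivial_in_Gamma w"
  using triv_U3_right triv_swap by metis

lemma triv_SS: "trivial_in_Gamma ([S] @ v @ [S]) \<longleftrightarrow> trivial_in_Gamma v"
proof -
  have "trivial_in_Gamma ([S] @ v @ [S]) \<longleftrightarrow> trivial_in_Gamma (v @ [S,S])"
    using triv_swap[of "[S]" "v @ [S]"] by simp
  also have "\<dots> \<longleftrightarrow> trivial_in_Gamma v"
    by (rule triv_scale[of _ "-1"]) (simp_all add: mat_id_def)
  finally show ?thesis .
qed

lemma triv_conj: "trivial_in_Gamma (Uexp a @ X @ Uexp b) \<longleftrightarrow> trivial_in_Gamma (X @ Uexp ((a + b) mod 3))"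
proof -
  have "trivial_in_Gamma (Uexp a @ X @ Uexp b) \<longleftrightarrow> trivial_in_Gamma (X @ Uexp b @ Uexp a)"
    using triv_swap[of "Uexp a" "X @ Uexp b"] by simp
  also have "X @ Uexp b @ Uexp a = (X @ Uexp ((a+b) mod 3)) @ Uexp (3 * ((a+b) div 3))"
    using Uexp_add[of "(a+b) mod 3" "3 * ((a+b) div 3)"] Uexp_add[of b a] by (simp add: add.commute)
  finally show ?thesis using triv_U3_right[of "X @ Uexp ((a+b) mod 3)"] by simp
qed




lemma Uexp_prefix_inj: "Uexp a @ S # r = Uexp c @ S # r' \<Longrightarrow> a = c \<and> r = r'"
proof (induction a arbitrary: c)
  case 0 then show ?case by (cases c) (auto simp: Uexp_Suc)
next
  case (Suc a) then show ?case by (cases c) (auto simp: Uexp_Suc)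
qed

lemma rev_Uexp[simp]: "rev (Uexp a) = Uexp a" by (simp add: Uexp_def)

lemma block_inj:
  assumes "Uexp a @ [S] @ B @ [S] @ Uexp b = Uexp c @ [S] @ B' @ [S] @ Uexp d"
  shows "a = c \<and> B = B' \<and> b = d"
proof -
  from assms have 1: "a = c" and e: "B @ S # Uexp b = B' @ S # Uexp d"
    using Uexp_prefix_inj[of a "B @ S # Uexp b" c "B' @ S # Uexp d"] by auto
  from e have "rev (B @ S # Uexp b) = rev (B' @ S # Uexp d)" by simp
  then have "Uexp b @ S # rev B = Uexp d @ S # rev B'" by simp
  then have "b = d \<and> rev B = rev B'" by (rule Uexp_prefix_inj)
  then show ?thesis using 1 by simp
qed

lemma decomp_left: "S \<in> set v \<Longrightarrow> \<exists>a r. v = Uexp a @ S # r"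
proof (induction v)
  case (Cons x v)
  show ?case
  proof (cases x)
    case U
    then have "S \<in> set v" using Cons by simp
    then obtain a r where "v = Uexp a @ S # r" using Cons by blast
    then have "x # v = Uexp (Suc a) @ S # r" using U by (simp add: Uexp_Suc)
    then show ?thesis by blast
  next
    case S then have "x # v = Uexp 0 @ S # v" by simp
    then show ?thesis by blast
  qed
qed simp

lemma decomp_right: "S \<in> set v \<Longrightarrow> \<exists>r b. v = r @ S # Uexp b"
proof -
  assume "S \<in> set v"
  then have "S \<in> set (rev v)" by simp
  then obtain a r where "rev v = Uexp a @ S # r" using decomp_left by blast
  then have "v = rev r @ S # Uexp a" by (metis rev_Uexp rev_append rev_rev_ident rev.simps append_assoc append_Cons append_Nil)
  then show ?thesis by blast
qed

lemma noS: "S \<notin> set v \<Longrightarrow> v = Uexp (length v)"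
proof (induction v)
  case (Cons x v) then show ?case by (cases x) (auto simp: Uexp_Suc)
qed simp

lemma length_count: "length w = count_list w U + count_list w S"
proof (induction w)
  case (Cons x w) then show ?case by (cases x) auto
qed simp

lemma UNIV_letter: "(UNIV :: letter set) = {U, S}"
  using letter.exhaust by blast

definition T :: "(letter list \<Rightarrow> bool) \<Rightarrow> nat \<Rightarrow> nat \<Rightarrow> letter list set" where
  "T P n m = {w \<in> Wset. count_list w U = n \<and> count_list w S = m \<and> P w}"

lemma cnt_T: "cnt P (int n) (int m) = card (T P n m)"
  by (simp add: cnt_def T_def)

lemma T_iff: "w \<in> T P n m \<longleftrightarrow> w \<noteq> [] \<and> trivial_in_Gamma w \<and> nss w \<and> count_list w U = n \<and> count_list w S = m \<and> P w"
  by (auto simp: T_def Wset_iff)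

lemma finite_T: "finite (T P n m)"
proof -
  have "T P n m \<subseteq> {xs. set xs \<subseteq> UNIV \<and> length xs = n + m}"
    by (auto simp: T_def length_count)
  moreover have "finite {xs :: letter list. set xs \<subseteq> UNIV \<and> length xs = n + m}"
    by (rule finite_lists_length_eq) (simp add: UNIV_letter)
  ultimately show ?thesis by (rule finite_subset)
qed

lemma hd_last_split: "B \<noteq> [] \<Longrightarrow> hd B = U \<Longrightarrow> last B = U \<Longrightarrow> B = [U] \<or> (\<exists>B'. B = [U] @ B' @ [U])"
proof (cases B)
  case (Cons x r)
  assume h: "B \<noteq> []" "hd B = U" "last B = U"
  show ?thesis
  proof (cases r rule: rev_cases)
    case Nil then show ?thesis using Cons h by simp
  next
    case (snoc ys y) then show ?thesis using Cons h by simp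
  qed
qed simp

lemma fa_char:
  assumes "nss ([S] @ B @ [S])" "count_list B U mod 3 = 0"
  shows "form_a ([S] @ B @ [S])"
proof -
  have h: "B \<noteq> []" "hd B = U" "last B = U" using nss_S_block[of B] assms(1) by blast+
  from hd_last_split[OF h] assms(2) obtain B' where B: "B = [U] @ B' @ [U]" by auto
  have "B' \<noteq> []"
  proof
    assume "B' = []"
    then have "count_list B U = 2" using B by simp
    then show False using assms(2) by simp
  qed
  then show ?thesis unfolding form_a_def using B by auto
qed

lemma fa_shape: "form_a x \<Longrightarrow> \<exists>B. x = [S] @ B @ [S] \<and> B \<noteq> []"
  unfolding form_a_def by (metis Cons_eq_appendI append_Cons append_Nil append_assoc list.distinct(1))

lemma nss_block_iff: "nss (Uexp a @ [S] @ B @ [S] @ Uexp b) \<longleftrightarrow> nss ([S] @ B @ [S])"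
  using nss_Uexp_left[of a "[S] @ B @ [S] @ Uexp b"] nss_Uexp_right[of "[S] @ B @ [S]" b] by simp

lemma triv_block: "trivial_in_Gamma (Uexp a @ X @ Uexp b) \<longleftrightarrow> trivial_in_Gamma (X @ Uexp ((a + b) mod 3))"
  by (rule triv_conj)




lemma idB:
  assumes m: "m \<ge> 1"
  shows "card (T form_b (3*n) (2*m)) = (\<Sum>k\<in>{1..n}. (3*k - 1) * card (T form_a (3*(n-k)) (2*m)))"
proof -
  define Sg where "Sg = (SIGMA k:{1..n}. {1..3*k-1} \<times> T form_a (3*(n-k)) (2*m))"
  define \<phi> where "\<phi> = (\<lambda>(k::nat,(\<alpha>::nat,x::letter list)). Uexp \<alpha> @ x @ Uexp (3*k-\<alpha>))"
  have cS: "card Sg = (\<Sum>k\<in>{1..n}. (3*k - 1) * card (T form_a (3*(n-k)) (2*m)))"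
    unfolding Sg_def by (simp add: card_cartesian_product finite_T)
  have inj: "inj_on \<phi> Sg"
  proof (rule inj_onI)
    fix p q assume p: "p \<in> Sg" and q: "q \<in> Sg" and e: "\<phi> p = \<phi> q"
    obtain k \<alpha> x where pp: "p = (k,\<alpha>,x)" by (metis prod_cases3)
    obtain k' \<alpha>' x' where qq: "q = (k',\<alpha>',x')" by (metis prod_cases3)
    from p pp have "form_a x" "\<alpha> \<in> {1..3*k-1}" by (auto simp: Sg_def T_iff)
    then obtain B where B: "x = [S] @ B @ [S]" using fa_shape by blast
    from q qq have "form_a x'" "\<alpha>' \<in> {1..3*k'-1}" by (auto simp: Sg_def T_iff)
    then obtain B' where B': "x' = [S] @ B' @ [S]" using fa_shape by blast
    from e have "Uexp \<alpha> @ [S] @ B @ [S] @ Uexp (3*k-\<alpha>) = Uexp \<alpha>' @ [S] @ B' @ [S] @ Uexp (3*k'-\<alpha>')"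
      by (simp add: \<phi>_def pp qq B B')
    from block_inj[OF this] have "\<alpha> = \<alpha>'" "B = B'" "3*k-\<alpha> = 3*k'-\<alpha>'" by auto
    then show "p = q" using \<open>\<alpha> \<in> _\<close> \<open>\<alpha>' \<in> _\<close> pp qq B B' by auto
  qed
  have img: "\<phi> ` Sg = T form_b (3*n) (2*m)"
  proof
    show "\<phi> ` Sg \<subseteq> T form_b (3*n) (2*m)"
    proof
      fix w assume "w \<in> \<phi> ` Sg"
      then obtain k \<alpha> x where k: "k \<in> {1..n}" and a: "\<alpha> \<in> {1..3*k-1}" and x: "x \<in> T form_a (3*(n-k)) (2*m)"
        and w: "w = Uexp \<alpha> @ x @ Uexp (3*k-\<alpha>)" by (auto simp: Sg_def \<phi>_def)
      from x have xa: "form_a x" "trivial_in_Gamma x" "nss x" "count_list x U = 3*(n-k)" "count_list x S = 2*m"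
        by (auto simp: T_iff)
      then obtain B where B: "x = [S] @ B @ [S]" "B \<noteq> []" using fa_shape by blast
      have s3: "\<alpha> + (3*k-\<alpha>) = 3*k" using a by auto
      have tr: "trivial_in_Gamma w" using triv_block[of \<alpha> x "3*k-\<alpha>"] xa s3 w by simp
      have ns: "nss w" using xa B w nss_block_iff[of \<alpha> B "3*k-\<alpha>"] by simp
      have fb: "form_b w" unfolding form_b_def
        apply (rule disjI1)
        apply (rule exI[of _ B], rule exI[of _ \<alpha>], rule exI[of _ "3*k-\<alpha>"])
        using B a w s3 by auto
      have nk: "3*(n-k) + 3*k = 3*n" using k by (simp add: diff_mult_distrib2)
      have cw: "count_list w U = 3*n" using w xa(4) s3 nk by simp
      have cw2: "count_list w S = 2*m" using w xa(5) by simp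
      have wne: "w \<noteq> []" using w B by simp
      show "w \<in> T form_b (3*n) (2*m)" unfolding T_iff using tr ns fb cw cw2 wne by simp
    qed
  next
    show "T form_b (3*n) (2*m) \<subseteq> \<phi> ` Sg"
    proof
      fix w assume w: "w \<in> T form_b (3*n) (2*m)"
      then have wa: "form_b w" "trivial_in_Gamma w" "nss w" "count_list w U = 3*n" "count_list w S = 2*m"
        by (auto simp: T_iff)
      have ng: "\<not> (\<exists>\<gamma>. \<gamma> > 0 \<and> \<gamma> mod 3 = 0 \<and> w = Uexp \<gamma>)" using wa(5) m by auto
      have "\<exists>B \<alpha> \<beta>. B \<noteq> [] \<and> \<alpha> > 0 \<and> \<beta> > 0 \<and> (\<alpha> + \<beta>) mod 3 = 0 \<and>
        w = Uexp \<alpha> @ [S] @ B @ [S] @ Uexp \<beta>"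
        using wa(1) ng unfolding form_b_def by (elim disjE) simp_all
      then obtain B \<alpha> \<beta> where B: "B \<noteq> []" "\<alpha> > 0" "\<beta> > 0" "(\<alpha>+\<beta>) mod 3 = 0"
        "w = Uexp \<alpha> @ [S] @ B @ [S] @ Uexp \<beta>" by (elim exE conjE) simp
      define k where "k = (\<alpha>+\<beta>) div 3"
      have ab: "\<alpha> + \<beta> = 3*k" using B(4) unfolding k_def by auto
      have k1: "k \<ge> 1" using ab B by auto
      define x where "x = [S] @ B @ [S]"
      have cU: "count_list w U = 3*k + count_list B U" using B(5) ab by simp
      have kn: "k \<le> n" using cU wa(4) by simp
      have cx: "count_list x U = 3*(n-k)" using cU wa(4) unfolding x_def by simp
      have trx: "trivial_in_Gamma x" using wa(2) triv_block[of \<alpha> x \<beta>] B(4) B(5) unfolding x_def by simp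
      have nsx: "nss x" using wa(3) B(5) nss_block_iff[of \<alpha> B \<beta>] unfolding x_def by simp
      have fa: "form_a x" using fa_char[of B] nsx cx unfolding x_def by simp
      have xT: "x \<in> T form_a (3*(n-k)) (2*m)"
        using trx nsx fa cx wa(5) B(5) unfolding T_iff x_def by simp
      have "(k,\<alpha>,x) \<in> Sg" using xT k1 kn ab B unfolding Sg_def by auto
      moreover have "\<beta> = 3*k - \<alpha>" using ab by simp
      then have "w = \<phi> (k,\<alpha>,x)" using B(5) unfolding \<phi>_def x_def by simp
      ultimately show "w \<in> \<phi> ` Sg" by blast
    qed
  qed
  have "card (T form_b (3*n) (2*m)) = card Sg" using card_image[OF inj] img by simp
  then show ?thesis using cS by simp
qed




abbreviation core :: "letter list \<Rightarrow> letter list" where "core B \<equiv> [S] @ B @ [S]"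

lemma blockT:
  assumes w: "w = Uexp a @ [S] @ B @ [S] @ Uexp b"
  shows "w \<in> T P N M \<longleftrightarrow> trivial_in_Gamma (core B @ Uexp ((a+b) mod 3)) \<and> nss (core B)
     \<and> count_list B U + a + b = N \<and> count_list B S + 2 = M \<and> P w"
proof -
  have "w \<noteq> []" using w by simp
  moreover have "trivial_in_Gamma w \<longleftrightarrow> trivial_in_Gamma (core B @ Uexp ((a+b) mod 3))"
    using triv_block[of a "core B" b] w by simp
  moreover have "nss w \<longleftrightarrow> nss (core B)" using nss_block_iff[of a B b] w by simp
  moreover have "count_list w U = count_list B U + a + b" "count_list w S = count_list B S + 2"
    using w by simp_all
  ultimately show ?thesis unfolding T_iff by auto
qed

definition strip :: "nat \<Rightarrow> nat \<Rightarrow> letter list \<Rightarrow> letter list" where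
  "strip p q x = take (length x - p - q - 2) (drop (p+1) x)"

lemma strip_eq[simp]: "strip p q (Uexp p @ S # B @ S # Uexp q) = B"
  by (simp add: strip_def Uexp_def)

lemma generic:
  fixes K :: "nat set" and R :: "nat \<Rightarrow> nat set" and a b N :: "nat \<Rightarrow> nat \<Rightarrow> nat"
    and NN :: "nat \<Rightarrow> nat"
  assumes fin: "finite K" "\<And>k. k \<in> K \<Longrightarrow> finite (R k)"
  and injab: "\<And>k r k' r'. k \<in> K \<Longrightarrow> r \<in> R k \<Longrightarrow> k' \<in> K \<Longrightarrow> r' \<in> R k' \<Longrightarrow>
        a k r = a k' r' \<Longrightarrow> b k r = b k' r' \<Longrightarrow> k = k' \<and> r = r'"
  and Qchar: "\<And>k x. k \<in> K \<Longrightarrow> x \<in> T Q (NN k) M \<longleftrightarrow> (\<exists>B. x = Uexp p @ [S] @ B @ [S] @ Uexp q \<and>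
        trivial_in_Gamma (core B @ Uexp t) \<and> nss (core B) \<and> count_list B U + p + q = NN k
        \<and> count_list B S + 2 = M)"
  and Pchar: "\<And>w. w \<in> T P NP M \<longleftrightarrow> (\<exists>k\<in>K. \<exists>r\<in>R k. \<exists>B. w = Uexp (a k r) @ [S] @ B @ [S] @ Uexp (b k r) \<and>
        trivial_in_Gamma (core B @ Uexp t) \<and> nss (core B) \<and> count_list B U + p + q = NN k
        \<and> count_list B S + 2 = M)"
  shows "card (T P NP M) = (\<Sum>k\<in>K. card (R k) * card (T Q (NN k) M))"
proof -
  define Sg where "Sg = (SIGMA k:K. R k \<times> T Q (NN k) M)"
  define \<phi> where "\<phi> = (\<lambda>(k::nat,(r::nat,x::letter list)). Uexp (a k r) @ [S] @ strip p q x @ [S] @ Uexp (b k r))"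
  have cS: "card Sg = (\<Sum>k\<in>K. card (R k) * card (T Q (NN k) M))"
    unfolding Sg_def using fin by (simp add: card_cartesian_product finite_T)
  have inj: "inj_on \<phi> Sg"
  proof (rule inj_onI)
    fix u v assume u: "u \<in> Sg" and v: "v \<in> Sg" and e: "\<phi> u = \<phi> v"
    obtain k r x where uu: "u = (k,r,x)" by (metis prod_cases3)
    obtain k' r' x' where vv: "v = (k',r',x')" by (metis prod_cases3)
    from u uu have k: "k \<in> K" "r \<in> R k" "x \<in> T Q (NN k) M" by (auto simp: Sg_def)
    then obtain B where B: "x = Uexp p @ [S] @ B @ [S] @ Uexp q" using Qchar by blast
    from v vv have k': "k' \<in> K" "r' \<in> R k'" "x' \<in> T Q (NN k') M" by (auto simp: Sg_def)
    then obtain B' where B': "x' = Uexp p @ [S] @ B' @ [S] @ Uexp q" using Qchar by blast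
    from e have "Uexp (a k r) @ [S] @ B @ [S] @ Uexp (b k r) = Uexp (a k' r') @ [S] @ B' @ [S] @ Uexp (b k' r')"
      by (simp add: \<phi>_def uu vv B B')
    from block_inj[OF this] have "a k r = a k' r'" "B = B'" "b k r = b k' r'" by auto
    with injab[OF k(1,2) k'(1,2)] show "u = v" using uu vv B B' by simp
  qed
  have img: "\<phi> ` Sg = T P NP M"
  proof
    show "\<phi> ` Sg \<subseteq> T P NP M"
    proof
      fix w assume "w \<in> \<phi> ` Sg"
      then obtain k r x where k: "k \<in> K" "r \<in> R k" "x \<in> T Q (NN k) M"
        and w: "w = \<phi> (k,r,x)" by (auto simp: Sg_def)
      from Qchar[OF k(1)] k(3) obtain B where B: "x = Uexp p @ [S] @ B @ [S] @ Uexp q"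
        "trivial_in_Gamma (core B @ Uexp t)" "nss (core B)" "count_list B U + p + q = NN k"
        "count_list B S + 2 = M" by blast
      have w': "w = Uexp (a k r) @ [S] @ B @ [S] @ Uexp (b k r)" using w B(1) by (simp add: \<phi>_def)
      show "w \<in> T P NP M" unfolding Pchar
        apply (rule bexI[OF _ k(1)], rule bexI[OF _ k(2)], rule exI[of _ B])
        using w' B by simp
    qed
  next
    show "T P NP M \<subseteq> \<phi> ` Sg"
    proof
      fix w assume "w \<in> T P NP M"
      then obtain k r B where k: "k \<in> K" "r \<in> R k" and B: "w = Uexp (a k r) @ [S] @ B @ [S] @ Uexp (b k r)"
        "trivial_in_Gamma (core B @ Uexp t)" "nss (core B)" "count_list B U + p + q = NN k"
        "count_list B S + 2 = M" unfolding Pchar by blast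
      define x where "x = Uexp p @ [S] @ B @ [S] @ Uexp q"
      have "x \<in> T Q (NN k) M" unfolding Qchar[OF k(1)]
        apply (rule exI[of _ B]) using B x_def by simp
      then have "(k,r,x) \<in> Sg" using k by (simp add: Sg_def)
      moreover have "w = \<phi> (k,r,x)" using B(1) by (simp add: \<phi>_def x_def)
      ultimately show "w \<in> \<phi> ` Sg" by (rule rev_image_eqI)
    qed
  qed
  have "card (T P NP M) = card Sg" using card_image[OF inj] img by simp
  then show ?thesis using cS by simp
qed




lemma Uexp_1: "Uexp 1 = [U]" by (simp add: Uexp_def)

lemma nss_core_ne: "nss (core B) \<Longrightarrow> B \<noteq> []"
  using nss_S_block[of B] by blast

lemma Qfa: assumes "N mod 3 = 0"
  shows "x \<in> T form_a N M \<longleftrightarrow> (\<exists>B. x = [S] @ B @ [S] \<and>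
        trivial_in_Gamma (core B) \<and> nss (core B) \<and> count_list B U = N
        \<and> count_list B S + 2 = M)"
proof
  assume x: "x \<in> T form_a N M"
  then have "form_a x" by (simp add: T_iff)
  then obtain B where B: "x = [S] @ B @ [S]" using fa_shape by blast
  have "x = Uexp 0 @ [S] @ B @ [S] @ Uexp 0" using B by simp
  from blockT[OF this, of form_a N M] x show "\<exists>B. x = [S] @ B @ [S] \<and>
        trivial_in_Gamma (core B) \<and> nss (core B) \<and> count_list B U = N
        \<and> count_list B S + 2 = M" using B by auto
next
  assume "\<exists>B. x = [S] @ B @ [S] \<and>
        trivial_in_Gamma (core B) \<and> nss (core B) \<and> count_list B U = N
        \<and> count_list B S + 2 = M"
  then obtain B where B: "x = [S] @ B @ [S]" "trivial_in_Gamma (core B)" "nss (core B)" "count_list B U = N"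
        "count_list B S + 2 = M" by blast
  have fa: "form_a x" using fa_char[of B] B assms by simp
  have "x = Uexp 0 @ [S] @ B @ [S] @ Uexp 0" using B by simp
  from blockT[OF this, of form_a N M] show "x \<in> T form_a N M" using B fa by simp
qed

lemma Qfdf:
  shows "x \<in> T form_dfrak N M \<longleftrightarrow> (\<exists>B. x = Uexp 1 @ [S] @ B @ [S] @ Uexp 1 \<and>
        trivial_in_Gamma (core B @ Uexp 2) \<and> nss (core B) \<and> count_list B U + 1 + 1 = N
        \<and> count_list B S + 2 = M)"
proof
  assume x: "x \<in> T form_dfrak N M"
  then have "form_dfrak x" by (simp add: T_iff)
  then obtain B where B: "x = [U,S] @ B @ [S,U]" unfolding form_dfrak_def by blast
  have xx: "x = Uexp 1 @ [S] @ B @ [S] @ Uexp 1" using B by (simp add: Uexp_def)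
  from blockT[OF xx, of form_dfrak N M] x show "\<exists>B. x = Uexp 1 @ [S] @ B @ [S] @ Uexp 1 \<and>
        trivial_in_Gamma (core B @ Uexp 2) \<and> nss (core B) \<and> count_list B U + 1 + 1 = N
        \<and> count_list B S + 2 = M" using xx by (auto simp: numeral_2_eq_2)
next
  assume "\<exists>B. x = Uexp 1 @ [S] @ B @ [S] @ Uexp 1 \<and>
        trivial_in_Gamma (core B @ Uexp 2) \<and> nss (core B) \<and> count_list B U + 1 + 1 = N
        \<and> count_list B S + 2 = M"
  then obtain B where B: "x = Uexp 1 @ [S] @ B @ [S] @ Uexp 1" "trivial_in_Gamma (core B @ Uexp 2)" "nss (core B)"
    "count_list B U + 1 + 1 = N" "count_list B S + 2 = M" by blast
  have "form_dfrak x" unfolding form_dfrak_def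
    apply (rule exI[of _ B]) using B nss_core_ne[OF B(3)] by (simp add: Uexp_def)
  from blockT[OF B(1), of form_dfrak N M] show "x \<in> T form_dfrak N M" using B \<open>form_dfrak x\<close> by (simp add: numeral_2_eq_2)
qed

lemma Qfff:
  shows "x \<in> T form_ffrak N M \<longleftrightarrow> (\<exists>B. x = Uexp 0 @ [S] @ B @ [S] @ Uexp 1 \<and>
        trivial_in_Gamma (core B @ Uexp 1) \<and> nss (core B) \<and> count_list B U + 0 + 1 = N
        \<and> count_list B S + 2 = M)"
proof
  assume x: "x \<in> T form_ffrak N M"
  then have "form_ffrak x" by (simp add: T_iff)
  then obtain B where B: "x = [S] @ B @ [S,U]" unfolding form_ffrak_def by blast
  have xx: "x = Uexp 0 @ [S] @ B @ [S] @ Uexp 1" using B by (simp add: Uexp_def)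
  from blockT[OF xx, of form_ffrak N M] x show "\<exists>B. x = Uexp 0 @ [S] @ B @ [S] @ Uexp 1 \<and>
        trivial_in_Gamma (core B @ Uexp 1) \<and> nss (core B) \<and> count_list B U + 0 + 1 = N
        \<and> count_list B S + 2 = M" using xx by auto
next
  assume "\<exists>B. x = Uexp 0 @ [S] @ B @ [S] @ Uexp 1 \<and>
        trivial_in_Gamma (core B @ Uexp 1) \<and> nss (core B) \<and> count_list B U + 0 + 1 = N
        \<and> count_list B S + 2 = M"
  then obtain B where B: "x = Uexp 0 @ [S] @ B @ [S] @ Uexp 1" "trivial_in_Gamma (core B @ Uexp 1)" "nss (core B)"
    "count_list B U + 0 + 1 = N" "count_list B S + 2 = M" by blast
  have "form_ffrak x" unfolding form_ffrak_def
    apply (rule exI[of _ B]) using B nss_core_ne[OF B(3)] by (simp add: Uexp_def)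
  from blockT[OF B(1), of form_ffrak N M] show "x \<in> T form_ffrak N M" using B \<open>form_ffrak x\<close> by simp
qed




lemma ar1: "(c::nat) + 3*k = 3*n \<Longrightarrow> k \<le> n \<and> c = 3*(n-k)" by arith
lemma ar2: "(k::nat) \<le> n \<Longrightarrow> 3*(n-k) + 3*k = 3*n" by arith

lemma idC: "card (T form_c (3*n) (2*m)) = 2 * (\<Sum>k\<in>{1..n}. card (T form_a (3*(n-k)) (2*m)))"
proof -
  let ?a = "\<lambda>k (r::nat). if r = 0 then 3*k else (0::nat)"
  let ?b = "\<lambda>k (r::nat). if r = 0 then 0 else 3*(k::nat)"
  have Pchar: "w \<in> T form_c (3*n) (2*m) \<longleftrightarrow> (\<exists>k\<in>{1..n}. \<exists>r\<in>{0,1}. \<exists>B. w = Uexp (?a k r) @ [S] @ B @ [S] @ Uexp (?b k r) \<and>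
        trivial_in_Gamma (core B @ Uexp 0) \<and> nss (core B) \<and> count_list B U + 0 + 0 = 3*(n-k)
        \<and> count_list B S + 2 = 2*m)" for w
  proof
    assume w: "w \<in> T form_c (3*n) (2*m)"
    then have "form_c w" by (simp add: T_iff)
    then obtain B \<alpha> where B: "B \<noteq> []" "\<alpha> > 0" "\<alpha> mod 3 = 0"
      and ww: "w = Uexp \<alpha> @ [S] @ B @ [S] \<or> w = [S] @ B @ [S] @ Uexp \<alpha>"
      using \<open>form_c w\<close> unfolding form_c_def by (elim exE conjE) (rule that; assumption)
    define k where "k = \<alpha> div 3"
    have ak: "\<alpha> = 3*k" using B(3) unfolding k_def by auto
    have k1: "k \<ge> 1" using ak B(2) by simp
    obtain r where r: "r \<in> {0::nat,1}" and wr: "w = Uexp (?a k r) @ [S] @ B @ [S] @ Uexp (?b k r)"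
    proof (cases "w = Uexp \<alpha> @ [S] @ B @ [S]")
      case True then show ?thesis using that[of 0] ak by simp
    next
      case False then show ?thesis using that[of 1] ak ww by simp
    qed
    have sab: "?a k r + ?b k r = 3*k" by simp
    from blockT[OF wr, of form_c "3*n" "2*m"] w sab
    have h: "trivial_in_Gamma (core B) \<and> nss (core B) \<and> count_list B U + 3*k = 3*n \<and> count_list B S + 2 = 2*m"
      by (simp add: add.assoc)
    from ar1[of "count_list B U" k n] h have kn: "k \<le> n" "count_list B U = 3*(n-k)" by auto
    show "\<exists>k\<in>{1..n}. \<exists>r\<in>{0,1}. \<exists>B. w = Uexp (?a k r) @ [S] @ B @ [S] @ Uexp (?b k r) \<and>
        trivial_in_Gamma (core B @ Uexp 0) \<and> nss (core B) \<and> count_list B U + 0 + 0 = 3*(n-k)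
        \<and> count_list B S + 2 = 2*m"
      apply (rule bexI[where x=k], rule bexI[where x=r], rule exI[where x=B])
      using wr h kn k1 r by auto
  next
    assume "\<exists>k\<in>{1..n}. \<exists>r\<in>{0,1}. \<exists>B. w = Uexp (?a k r) @ [S] @ B @ [S] @ Uexp (?b k r) \<and>
        trivial_in_Gamma (core B @ Uexp 0) \<and> nss (core B) \<and> count_list B U + 0 + 0 = 3*(n-k)
        \<and> count_list B S + 2 = 2*m"
    then obtain k r B where k: "k \<in> {1..n}" "r \<in> {0::nat,1}" and wr: "w = Uexp (?a k r) @ [S] @ B @ [S] @ Uexp (?b k r)"
      and h0: "trivial_in_Gamma (core B @ Uexp 0)" "nss (core B)" "count_list B U + 0 + 0 = 3*(n-k)" "count_list B S + 2 = 2*m"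
      by (elim bexE exE conjE) (rule that; assumption)
    have h: "trivial_in_Gamma (core B)" "nss (core B)" "count_list B U = 3*(n-k)" "count_list B S + 2 = 2*m"
      using h0 by simp_all
    have sab: "?a k r + ?b k r = 3*k" by simp
    have fc: "form_c w" unfolding form_c_def
      apply (rule exI[of _ B], rule exI[of _ "3*k"])
      using k wr nss_core_ne[OF h(2)] by auto
    have cnt: "count_list B U + ?a k r + ?b k r = 3*n" using ar2[of k n] k h(3) sab by simp
    show "w \<in> T form_c (3*n) (2*m)" unfolding blockT[OF wr]
      using h fc cnt sab by simp
  qed
  have "card (T form_c (3*n) (2*m)) = (\<Sum>k\<in>{1..n}. card {0::nat,1} * card (T form_a (3*(n-k)) (2*m)))"
  proof (rule generic[where K="{1..n}" and R="\<lambda>k. {0,1}" and a="?a" and b="?b" and NN="\<lambda>k. 3*(n-k)"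
        and p=0 and q=0 and t=0 and Q=form_a])
    show "finite {1..n}" by simp
    show "\<And>k. finite {0::nat,1}" by simp
    show "\<And>k r k' r'. k \<in> {1..n} \<Longrightarrow> r \<in> {0,1} \<Longrightarrow> k' \<in> {1..n} \<Longrightarrow> r' \<in> {0,1} \<Longrightarrow>
        ?a k r = ?a k' r' \<Longrightarrow> ?b k r = ?b k' r' \<Longrightarrow> k = k' \<and> r = r'"
      by (auto split: if_splits)
    show "\<And>k x. k \<in> {1..n} \<Longrightarrow> x \<in> T form_a (3*(n-k)) (2*m) \<longleftrightarrow> (\<exists>B. x = Uexp 0 @ [S] @ B @ [S] @ Uexp 0 \<and>
        trivial_in_Gamma (core B @ Uexp 0) \<and> nss (core B) \<and> count_list B U + 0 + 0 = 3*(n-k)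
        \<and> count_list B S + 2 = 2*m)"
      using Qfa by simp
  qed (rule Pchar)
  then show ?thesis by (simp add: sum_distrib_left mult_2)
qed




lemma idD: "card (T form_d (3*n) (2*m)) = (\<Sum>k\<in>{0..n}. (3*k+1) * card (T form_dfrak (3*(n-k)) (2*m)))"
proof -
  let ?a = "\<lambda>(k::nat) (j::nat). j + 1"
  let ?b = "\<lambda>(k::nat) (j::nat). 3*k - j + 1"
  have Pchar: "w \<in> T form_d (3*n) (2*m) \<longleftrightarrow> (\<exists>k\<in>{0..n}. \<exists>r\<in>{0..3*k}. \<exists>B. w = Uexp (?a k r) @ [S] @ B @ [S] @ Uexp (?b k r) \<and>
        trivial_in_Gamma (core B @ Uexp 2) \<and> nss (core B) \<and> count_list B U + 1 + 1 = 3*(n-k)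
        \<and> count_list B S + 2 = 2*m)" for w
  proof
    assume w: "w \<in> T form_d (3*n) (2*m)"
    then have "form_d w" by (simp add: T_iff)
    then obtain B \<alpha> \<beta> where B: "B \<noteq> []" "\<alpha> > 0" "\<beta> > 0" "(\<alpha>+\<beta>) mod 3 = 2"
      and ww: "w = Uexp \<alpha> @ [S] @ B @ [S] @ Uexp \<beta>"
      using \<open>form_d w\<close> unfolding form_d_def by (elim exE conjE) (rule that; assumption)
    define k where "k = (\<alpha>+\<beta>) div 3"
    have ak: "\<alpha> + \<beta> = 3*k + 2" using B(4) unfolding k_def by presburger
    define r where "r = \<alpha> - 1"
    have r: "r \<in> {0..3*k}" using ak B unfolding r_def by auto
    have wr: "w = Uexp (?a k r) @ [S] @ B @ [S] @ Uexp (?b k r)"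
    proof -
      have "?a k r = \<alpha>" "?b k r = \<beta>" using ak B unfolding r_def by auto
      then show ?thesis using ww by simp
    qed
    have sab: "?a k r + ?b k r = 3*k + 2" using r by simp
    have md: "(?a k r + ?b k r) mod 3 = 2" unfolding sab by presburger
    have bt: "trivial_in_Gamma (core B @ Uexp ((?a k r + ?b k r) mod 3)) \<and> nss (core B) \<and> count_list B U + ?a k r + ?b k r = 3*n \<and> count_list B S + 2 = 2*m"
      using iffD1[OF blockT[OF wr, of form_d "3*n" "2*m"] w] by blast
    have h: "trivial_in_Gamma (core B @ Uexp 2) \<and> nss (core B) \<and> (count_list B U + 2) + 3*k = 3*n \<and> count_list B S + 2 = 2*m"
    proof (intro conjI)
      show "trivial_in_Gamma (core B @ Uexp 2)" using bt md by metis
      show "(count_list B U + 2) + 3*k = 3*n" using bt sab by linarith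
    qed (use bt in auto)
    from ar1[of "count_list B U + 2" k n] h have kn: "k \<le> n" "count_list B U + 2 = 3*(n-k)" by auto
    show "\<exists>k\<in>{0..n}. \<exists>r\<in>{0..3*k}. \<exists>B. w = Uexp (?a k r) @ [S] @ B @ [S] @ Uexp (?b k r) \<and>
        trivial_in_Gamma (core B @ Uexp 2) \<and> nss (core B) \<and> count_list B U + 1 + 1 = 3*(n-k)
        \<and> count_list B S + 2 = 2*m"
      apply (rule bexI[where x=k], rule bexI[where x=r], rule exI[where x=B])
      using wr h kn r by auto
  next
    assume "\<exists>k\<in>{0..n}. \<exists>r\<in>{0..3*k}. \<exists>B. w = Uexp (?a k r) @ [S] @ B @ [S] @ Uexp (?b k r) \<and>
        trivial_in_Gamma (core B @ Uexp 2) \<and> nss (core B) \<and> count_list B U + 1 + 1 = 3*(n-k)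
        \<and> count_list B S + 2 = 2*m"
    then obtain k r B where k: "k \<in> {0..n}" "r \<in> {0..3*k}" and wr: "w = Uexp (?a k r) @ [S] @ B @ [S] @ Uexp (?b k r)"
      and h0: "trivial_in_Gamma (core B @ Uexp 2)" "nss (core B)" "count_list B U + 1 + 1 = 3*(n-k)" "count_list B S + 2 = 2*m"
      by (elim bexE exE conjE) (rule that; assumption)
    have sab: "?a k r + ?b k r = 3*k + 2" using k by simp
    have md: "(?a k r + ?b k r) mod 3 = 2" unfolding sab by presburger
    have fd: "form_d w" unfolding form_d_def
      apply (rule exI[where x=B], rule exI[where x="?a k r"], rule exI[where x="?b k r"])
      using k wr nss_core_ne[OF h0(2)] md by auto
    have cnt: "count_list B U + ?a k r + ?b k r = 3*n" using ar2[of k n] k h0(3) sab by simp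
    have md: "(?a k r + ?b k r) mod 3 = 2" unfolding sab by presburger
    show "w \<in> T form_d (3*n) (2*m)" unfolding blockT[OF wr]
      using h0 fd cnt md by simp
  qed
  have "card (T form_d (3*n) (2*m)) = (\<Sum>k\<in>{0..n}. card {0..3*k} * card (T form_dfrak (3*(n-k)) (2*m)))"
  proof (rule generic[where K="{0..n}" and R="\<lambda>k. {0..3*k}" and a="?a" and b="?b" and NN="\<lambda>k. 3*(n-k)"
        and p=1 and q=1 and t=2 and Q=form_dfrak])
    show "finite {0..n}" by simp
    show "\<And>k. finite {0..3*(k::nat)}" by simp
    show "\<And>k r k' r'. k \<in> {0..n} \<Longrightarrow> r \<in> {0..3*k} \<Longrightarrow> k' \<in> {0..n} \<Longrightarrow> r' \<in> {0..3*k'} \<Longrightarrow>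
        ?a k r = ?a k' r' \<Longrightarrow> ?b k r = ?b k' r' \<Longrightarrow> k = k' \<and> r = r'"
      by auto
    show "\<And>k x. k \<in> {0..n} \<Longrightarrow> x \<in> T form_dfrak (3*(n-k)) (2*m) \<longleftrightarrow> (\<exists>B. x = Uexp 1 @ [S] @ B @ [S] @ Uexp 1 \<and>
        trivial_in_Gamma (core B @ Uexp 2) \<and> nss (core B) \<and> count_list B U + 1 + 1 = 3*(n-k)
        \<and> count_list B S + 2 = 2*m)"
      by (rule Qfdf)
  qed (rule Pchar)
  then show ?thesis by simp
qed




lemma idE: "card (T form_e (3*n) (2*m)) = (\<Sum>k\<in>{1..n}. 3*k * card (T form_ffrak (3*(n-k)) (2*m)))"
proof -
  let ?a = "\<lambda>(k::nat) (j::nat). j + 1"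
  let ?b = "\<lambda>(k::nat) (j::nat). 3*k - j"
  have Pchar: "w \<in> T form_e (3*n) (2*m) \<longleftrightarrow> (\<exists>k\<in>{1..n}. \<exists>r\<in>{0..3*k-1}. \<exists>B. w = Uexp (?a k r) @ [S] @ B @ [S] @ Uexp (?b k r) \<and>
        trivial_in_Gamma (core B @ Uexp 1) \<and> nss (core B) \<and> count_list B U + 0 + 1 = 3*(n-k)
        \<and> count_list B S + 2 = 2*m)" for w
  proof
    assume w: "w \<in> T form_e (3*n) (2*m)"
    then have "form_e w" by (simp add: T_iff)
    then obtain B \<alpha> \<beta> where B: "B \<noteq> []" "\<alpha> > 0" "\<beta> > 0" "(\<alpha>+\<beta>) mod 3 = 1"
      and ww: "w = Uexp \<alpha> @ [S] @ B @ [S] @ Uexp \<beta>"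
      using \<open>form_e w\<close> unfolding form_e_def by (elim exE conjE) (rule that; assumption)
    define k where "k = (\<alpha>+\<beta>) div 3"
    have ak: "\<alpha> + \<beta> = 3*k + 1" using B(4) unfolding k_def by presburger
    have k1: "k \<ge> 1" using ak B(2,3) by linarith
    define r where "r = \<alpha> - 1"
    have r: "r \<in> {0..3*k-1}" using ak B unfolding r_def by auto
    have wr: "w = Uexp (?a k r) @ [S] @ B @ [S] @ Uexp (?b k r)"
    proof -
      have "?a k r = \<alpha>" "?b k r = \<beta>" using ak B unfolding r_def by auto
      then show ?thesis using ww by simp
    qed
    have sab: "?a k r + ?b k r = 3*k + 1" using r k1 by auto
    have md: "(?a k r + ?b k r) mod 3 = 1" unfolding sab by presburger
    have bt: "trivial_in_Gamma (core B @ Uexp ((?a k r + ?b k r) mod 3)) \<and> nss (core B) \<and> count_list B U + ?a k r + ?b k r = 3*n \<and> count_list B S + 2 = 2*m"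
      using iffD1[OF blockT[OF wr, of form_e "3*n" "2*m"] w] by blast
    have h: "trivial_in_Gamma (core B @ Uexp 1) \<and> nss (core B) \<and> (count_list B U + 1) + 3*k = 3*n \<and> count_list B S + 2 = 2*m"
    proof (intro conjI)
      show "trivial_in_Gamma (core B @ Uexp 1)" using bt md by metis
      show "(count_list B U + 1) + 3*k = 3*n" using bt sab by linarith
    qed (use bt in auto)
    from ar1[of "count_list B U + 1" k n] h have kn: "k \<le> n" "count_list B U + 1 = 3*(n-k)" by auto
    show "\<exists>k\<in>{1..n}. \<exists>r\<in>{0..3*k-1}. \<exists>B. w = Uexp (?a k r) @ [S] @ B @ [S] @ Uexp (?b k r) \<and>
        trivial_in_Gamma (core B @ Uexp 1) \<and> nss (core B) \<and> count_list B U + 0 + 1 = 3*(n-k)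
        \<and> count_list B S + 2 = 2*m"
      apply (rule bexI[where x=k], rule bexI[where x=r], rule exI[where x=B])
      using wr h kn r k1 by auto
  next
    assume "\<exists>k\<in>{1..n}. \<exists>r\<in>{0..3*k-1}. \<exists>B. w = Uexp (?a k r) @ [S] @ B @ [S] @ Uexp (?b k r) \<and>
        trivial_in_Gamma (core B @ Uexp 1) \<and> nss (core B) \<and> count_list B U + 0 + 1 = 3*(n-k)
        \<and> count_list B S + 2 = 2*m"
    then obtain k r B where k: "k \<in> {1..n}" "r \<in> {0..3*k-1}" and wr: "w = Uexp (?a k r) @ [S] @ B @ [S] @ Uexp (?b k r)"
      and h0: "trivial_in_Gamma (core B @ Uexp 1)" "nss (core B)" "count_list B U + 0 + 1 = 3*(n-k)" "count_list B S + 2 = 2*m"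
      by (elim bexE exE conjE) (rule that; assumption)
    have sab: "?a k r + ?b k r = 3*k + 1" using k by auto
    have md: "(?a k r + ?b k r) mod 3 = 1" unfolding sab by presburger
    have bpos: "?b k r > 0" using k by auto
    have fd: "form_e w" unfolding form_e_def
      apply (rule exI[where x=B], rule exI[where x="?a k r"], rule exI[where x="?b k r"])
      using k wr nss_core_ne[OF h0(2)] md bpos by auto
    have cnt: "count_list B U + ?a k r + ?b k r = 3*n" using ar2[of k n] k h0(3) sab by simp
    show "w \<in> T form_e (3*n) (2*m)" unfolding blockT[OF wr]
      using h0 fd cnt md by simp
  qed
  have "card (T form_e (3*n) (2*m)) = (\<Sum>k\<in>{1..n}. card {0..3*k-1} * card (T form_ffrak (3*(n-k)) (2*m)))"
  proof (rule generic[where K="{1..n}" and R="\<lambda>k. {0..3*k-1}" and a="?a" and b="?b" and NN="\<lambda>k. 3*(n-k)"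
        and p=0 and q=1 and t=1 and Q=form_ffrak])
    show "finite {1..n}" by simp
    show "\<And>k. finite {0..3*(k::nat)-1}" by simp
    show "\<And>k r k' r'. k \<in> {1..n} \<Longrightarrow> r \<in> {0..3*k-1} \<Longrightarrow> k' \<in> {1..n} \<Longrightarrow> r' \<in> {0..3*k'-1} \<Longrightarrow>
        ?a k r = ?a k' r' \<Longrightarrow> ?b k r = ?b k' r' \<Longrightarrow> k = k' \<and> r = r'"
      by auto
    show "\<And>k x. k \<in> {1..n} \<Longrightarrow> x \<in> T form_ffrak (3*(n-k)) (2*m) \<longleftrightarrow> (\<exists>B. x = Uexp 0 @ [S] @ B @ [S] @ Uexp 1 \<and>
        trivial_in_Gamma (core B @ Uexp 1) \<and> nss (core B) \<and> count_list B U + 0 + 1 = 3*(n-k)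
        \<and> count_list B S + 2 = 2*m)"
      by (rule Qfff)
  qed (rule Pchar)
  also have "\<dots> = (\<Sum>k\<in>{1..n}. 3*k * card (T form_ffrak (3*(n-k)) (2*m)))"
    by (rule sum.cong) auto
  finally show ?thesis .
qed




lemma idF: "card (T form_f (3*n) (2*m)) = 2 * (\<Sum>k\<in>{0..n}. card (T form_ffrak (3*(n-k)) (2*m)))"
proof -
  let ?a = "\<lambda>k (r::nat). if r = 0 then (0::nat) else 3*k+1"
  let ?b = "\<lambda>k (r::nat). if r = 0 then 3*k+1 else (0::nat)"
  have Pchar: "w \<in> T form_f (3*n) (2*m) \<longleftrightarrow> (\<exists>k\<in>{0..n}. \<exists>r\<in>{0,1}. \<exists>B. w = Uexp (?a k r) @ [S] @ B @ [S] @ Uexp (?b k r) \<and>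
        trivial_in_Gamma (core B @ Uexp 1) \<and> nss (core B) \<and> count_list B U + 0 + 1 = 3*(n-k)
        \<and> count_list B S + 2 = 2*m)" for w
  proof
    assume w: "w \<in> T form_f (3*n) (2*m)"
    then have "form_f w" by (simp add: T_iff)
    then obtain B \<alpha> where B: "B \<noteq> []" "\<alpha> mod 3 = 1"
      and ww: "w = [S] @ B @ [S] @ Uexp \<alpha> \<or> w = Uexp \<alpha> @ [S] @ B @ [S]"
      using \<open>form_f w\<close> unfolding form_f_def by (elim exE conjE) (rule that; assumption)
    define k where "k = \<alpha> div 3"
    have ak: "\<alpha> = 3*k+1" using B(2) unfolding k_def by presburger
    obtain r where r: "r \<in> {0::nat,1}" and wr: "w = Uexp (?a k r) @ [S] @ B @ [S] @ Uexp (?b k r)"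
    proof (cases "w = [S] @ B @ [S] @ Uexp \<alpha>")
      case True then show ?thesis using that[of 0] ak by simp
    next
      case False then show ?thesis using that[of 1] ak ww by simp
    qed
    have sab: "?a k r + ?b k r = 3*k+1" by simp
    have md: "(?a k r + ?b k r) mod 3 = 1" unfolding sab by presburger
    have bt: "trivial_in_Gamma (core B @ Uexp ((?a k r + ?b k r) mod 3)) \<and> nss (core B) \<and> count_list B U + ?a k r + ?b k r = 3*n \<and> count_list B S + 2 = 2*m"
      using iffD1[OF blockT[OF wr, of form_f "3*n" "2*m"] w] by blast
    have h: "trivial_in_Gamma (core B @ Uexp 1) \<and> nss (core B) \<and> (count_list B U + 1) + 3*k = 3*n \<and> count_list B S + 2 = 2*m"
    proof (intro conjI)
      show "trivial_in_Gamma (core B @ Uexp 1)" using bt md by metis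
      show "(count_list B U + 1) + 3*k = 3*n" using bt sab by linarith
    qed (use bt in auto)
    from ar1[of "count_list B U + 1" k n] h have kn: "k \<le> n" "count_list B U + 1 = 3*(n-k)" by auto
    show "\<exists>k\<in>{0..n}. \<exists>r\<in>{0,1}. \<exists>B. w = Uexp (?a k r) @ [S] @ B @ [S] @ Uexp (?b k r) \<and>
        trivial_in_Gamma (core B @ Uexp 1) \<and> nss (core B) \<and> count_list B U + 0 + 1 = 3*(n-k)
        \<and> count_list B S + 2 = 2*m"
      apply (rule bexI[where x=k], rule bexI[where x=r], rule exI[where x=B])
      using wr h kn r by auto
  next
    assume "\<exists>k\<in>{0..n}. \<exists>r\<in>{0,1}. \<exists>B. w = Uexp (?a k r) @ [S] @ B @ [S] @ Uexp (?b k r) \<and>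
        trivial_in_Gamma (core B @ Uexp 1) \<and> nss (core B) \<and> count_list B U + 0 + 1 = 3*(n-k)
        \<and> count_list B S + 2 = 2*m"
    then obtain k r B where k: "k \<in> {0..n}" "r \<in> {0::nat,1}" and wr: "w = Uexp (?a k r) @ [S] @ B @ [S] @ Uexp (?b k r)"
      and h0: "trivial_in_Gamma (core B @ Uexp 1)" "nss (core B)" "count_list B U + 0 + 1 = 3*(n-k)" "count_list B S + 2 = 2*m"
      by (elim bexE exE conjE) (rule that; assumption)
    have sab: "?a k r + ?b k r = 3*k+1" by simp
    have md: "(?a k r + ?b k r) mod 3 = 1" unfolding sab by presburger
    have m1: "(3*k+1) mod 3 = 1" by presburger
    have ff: "form_f w" unfolding form_f_def
      apply (rule exI[where x=B], rule exI[where x="3*k+1"])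
      using k wr nss_core_ne[OF h0(2)] m1 by auto
    have cnt: "count_list B U + ?a k r + ?b k r = 3*n" using ar2[of k n] k h0(3) sab by simp
    show "w \<in> T form_f (3*n) (2*m)" unfolding blockT[OF wr]
      using h0 ff cnt md by simp
  qed
  have "card (T form_f (3*n) (2*m)) = (\<Sum>k\<in>{0..n}. card {0::nat,1} * card (T form_ffrak (3*(n-k)) (2*m)))"
  proof (rule generic[where K="{0..n}" and R="\<lambda>k. {0,1}" and a="?a" and b="?b" and NN="\<lambda>k. 3*(n-k)"
        and p=0 and q=1 and t=1 and Q=form_ffrak])
    show "finite {0..n}" by simp
    show "\<And>k. finite {0::nat,1}" by simp
    show "\<And>k r k' r'. k \<in> {0..n} \<Longrightarrow> r \<in> {0,1} \<Longrightarrow> k' \<in> {0..n} \<Longrightarrow> r' \<in> {0,1} \<Longrightarrow>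
        ?a k r = ?a k' r' \<Longrightarrow> ?b k r = ?b k' r' \<Longrightarrow> k = k' \<and> r = r'"
      by (auto split: if_splits)
    show "\<And>k x. k \<in> {0..n} \<Longrightarrow> x \<in> T form_ffrak (3*(n-k)) (2*m) \<longleftrightarrow> (\<exists>B. x = Uexp 0 @ [S] @ B @ [S] @ Uexp 1 \<and>
        trivial_in_Gamma (core B @ Uexp 1) \<and> nss (core B) \<and> count_list B U + 0 + 1 = 3*(n-k)
        \<and> count_list B S + 2 = 2*m)"
      by (rule Qfff)
  qed (rule Pchar)
  then show ?thesis by (simp add: sum_distrib_left mult_2)
qed

lemma idG: "card (T form_g (3*n) (2*m)) = 2 * (\<Sum>k\<in>{0..n}. card (T form_dfrak (3*(n-k)) (2*m)))"
proof -
  let ?a = "\<lambda>k (r::nat). if r = 0 then (0::nat) else 3*k+2"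
  let ?b = "\<lambda>k (r::nat). if r = 0 then 3*k+2 else (0::nat)"
  have Pchar: "w \<in> T form_g (3*n) (2*m) \<longleftrightarrow> (\<exists>k\<in>{0..n}. \<exists>r\<in>{0,1}. \<exists>B. w = Uexp (?a k r) @ [S] @ B @ [S] @ Uexp (?b k r) \<and>
        trivial_in_Gamma (core B @ Uexp 2) \<and> nss (core B) \<and> count_list B U + 1 + 1 = 3*(n-k)
        \<and> count_list B S + 2 = 2*m)" for w
  proof
    assume w: "w \<in> T form_g (3*n) (2*m)"
    then have "form_g w" by (simp add: T_iff)
    then obtain B \<alpha> where B: "B \<noteq> []" "\<alpha> mod 3 = 2"
      and ww: "w = [S] @ B @ [S] @ Uexp \<alpha> \<or> w = Uexp \<alpha> @ [S] @ B @ [S]"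
      using \<open>form_g w\<close> unfolding form_g_def by (elim exE conjE) (rule that; assumption)
    define k where "k = \<alpha> div 3"
    have ak: "\<alpha> = 3*k+2" using B(2) unfolding k_def by presburger
    obtain r where r: "r \<in> {0::nat,1}" and wr: "w = Uexp (?a k r) @ [S] @ B @ [S] @ Uexp (?b k r)"
    proof (cases "w = [S] @ B @ [S] @ Uexp \<alpha>")
      case True then show ?thesis using that[of 0] ak by simp
    next
      case False then show ?thesis using that[of 1] ak ww by simp
    qed
    have sab: "?a k r + ?b k r = 3*k+2" by simp
    have md: "(?a k r + ?b k r) mod 3 = 2" unfolding sab by presburger
    have bt: "trivial_in_Gamma (core B @ Uexp ((?a k r + ?b k r) mod 3)) \<and> nss (core B) \<and> count_list B U + ?a k r + ?b k r = 3*n \<and> count_list B S + 2 = 2*m"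
      using iffD1[OF blockT[OF wr, of form_g "3*n" "2*m"] w] by blast
    have h: "trivial_in_Gamma (core B @ Uexp 2) \<and> nss (core B) \<and> (count_list B U + 2) + 3*k = 3*n \<and> count_list B S + 2 = 2*m"
    proof (intro conjI)
      show "trivial_in_Gamma (core B @ Uexp 2)" using bt md by metis
      show "(count_list B U + 2) + 3*k = 3*n" using bt sab by linarith
    qed (use bt in auto)
    from ar1[of "count_list B U + 2" k n] h have kn: "k \<le> n" "count_list B U + 2 = 3*(n-k)" by auto
    show "\<exists>k\<in>{0..n}. \<exists>r\<in>{0,1}. \<exists>B. w = Uexp (?a k r) @ [S] @ B @ [S] @ Uexp (?b k r) \<and>
        trivial_in_Gamma (core B @ Uexp 2) \<and> nss (core B) \<and> count_list B U + 1 + 1 = 3*(n-k)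
        \<and> count_list B S + 2 = 2*m"
      apply (rule bexI[where x=k], rule bexI[where x=r], rule exI[where x=B])
      using wr h kn r by auto
  next
    assume "\<exists>k\<in>{0..n}. \<exists>r\<in>{0,1}. \<exists>B. w = Uexp (?a k r) @ [S] @ B @ [S] @ Uexp (?b k r) \<and>
        trivial_in_Gamma (core B @ Uexp 2) \<and> nss (core B) \<and> count_list B U + 1 + 1 = 3*(n-k)
        \<and> count_list B S + 2 = 2*m"
    then obtain k r B where k: "k \<in> {0..n}" "r \<in> {0::nat,1}" and wr: "w = Uexp (?a k r) @ [S] @ B @ [S] @ Uexp (?b k r)"
      and h0: "trivial_in_Gamma (core B @ Uexp 2)" "nss (core B)" "count_list B U + 1 + 1 = 3*(n-k)" "count_list B S + 2 = 2*m"
      by (elim bexE exE conjE) (rule that; assumption)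
    have sab: "?a k r + ?b k r = 3*k+2" by simp
    have md: "(?a k r + ?b k r) mod 3 = 2" unfolding sab by presburger
    have m1: "(3*k+2) mod 3 = 2" by presburger
    have ff: "form_g w" unfolding form_g_def
      apply (rule exI[where x=B], rule exI[where x="3*k+2"])
      using k wr nss_core_ne[OF h0(2)] m1 by auto
    have cnt: "count_list B U + ?a k r + ?b k r = 3*n" using ar2[of k n] k h0(3) sab by simp
    show "w \<in> T form_g (3*n) (2*m)" unfolding blockT[OF wr]
      using h0 ff cnt md by simp
  qed
  have "card (T form_g (3*n) (2*m)) = (\<Sum>k\<in>{0..n}. card {0::nat,1} * card (T form_dfrak (3*(n-k)) (2*m)))"
  proof (rule generic[where K="{0..n}" and R="\<lambda>k. {0,1}" and a="?a" and b="?b" and NN="\<lambda>k. 3*(n-k)"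
        and p=1 and q=1 and t=2 and Q=form_dfrak])
    show "finite {0..n}" by simp
    show "\<And>k. finite {0::nat,1}" by simp
    show "\<And>k r k' r'. k \<in> {0..n} \<Longrightarrow> r \<in> {0,1} \<Longrightarrow> k' \<in> {0..n} \<Longrightarrow> r' \<in> {0,1} \<Longrightarrow>
        ?a k r = ?a k' r' \<Longrightarrow> ?b k r = ?b k' r' \<Longrightarrow> k = k' \<and> r = r'"
      by (auto split: if_splits)
    show "\<And>k x. k \<in> {0..n} \<Longrightarrow> x \<in> T form_dfrak (3*(n-k)) (2*m) \<longleftrightarrow> (\<exists>B. x = Uexp 1 @ [S] @ B @ [S] @ Uexp 1 \<and>
        trivial_in_Gamma (core B @ Uexp 2) \<and> nss (core B) \<and> count_list B U + 1 + 1 = 3*(n-k)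
        \<and> count_list B S + 2 = 2*m)"
      by (rule Qfdf)
  qed (rule Pchar)
  then show ?thesis by (simp add: sum_distrib_left mult_2)
qed





lemma triv_Nil: "trivial_in_Gamma []" by (simp add: trivial_in_Gamma_def mat_id_def)

lemma block_UU: "\<alpha> > 0 \<Longrightarrow> \<beta> > 0 \<Longrightarrow>
   Uexp \<alpha> @ [S] @ B @ [S] @ Uexp \<beta> = [U] @ (Uexp (\<alpha>-1) @ [S] @ B @ [S] @ Uexp (\<beta>-1)) @ [U]"
proof -
  assume a: "\<alpha> > 0" and b: "\<beta> > 0"
  have 1: "Uexp \<alpha> = [U] @ Uexp (\<alpha>-1)" using Uexp_Suc[of "\<alpha>-1"] a by simp
  have 2: "Uexp \<beta> = Uexp (\<beta>-1) @ [U]" using Uexp_Suc'[of "\<beta>-1"] b by simp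
  show ?thesis by (simp only: 1 2 append_assoc)
qed

lemma bde_UU: "form_b v \<or> form_d v \<or> form_e v \<Longrightarrow> \<exists>B'. B' \<noteq> [] \<and> v = [U] @ B' @ [U]"
proof -
  assume h: "form_b v \<or> form_d v \<or> form_e v"
  have blk: "\<exists>B'. B' \<noteq> [] \<and> v = [U] @ B' @ [U]" if "\<alpha> > 0" "\<beta> > 0" "v = Uexp \<alpha> @ [S] @ B @ [S] @ Uexp \<beta>" for \<alpha> \<beta> B
    apply (rule exI[where x="Uexp (\<alpha>-1) @ [S] @ B @ [S] @ Uexp (\<beta>-1)"])
    using block_UU[OF that(1,2), of B] that(3) by simp
  have gam: "\<exists>B'. B' \<noteq> [] \<and> v = [U] @ B' @ [U]" if g0: "\<gamma> > 0" "\<gamma> mod 3 = 0" "v = Uexp \<gamma>" for \<gamma>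
  proof -
    have "\<gamma> \<ge> 3" using g0(1,2) by presburger
    define g where "g = \<gamma> - 3"
    have g: "\<gamma> = Suc (Suc (Suc g))" using \<open>\<gamma> \<ge> 3\<close> unfolding g_def by simp
    have ug: "Uexp \<gamma> = [U] @ Uexp (Suc g) @ [U]" unfolding g by (simp add: Uexp_def replicate_append_same)
    have e: "v = [U] @ Uexp (Suc g) @ [U]" using g0(3) ug by (rule trans)
    have ne: "Uexp (Suc g) \<noteq> []" by (simp add: Uexp_Suc)
    show ?thesis by (intro exI[where x="Uexp (Suc g)"] conjI ne e)
  qed
  from h show ?thesis
  proof (elim disjE)
    assume "form_b v"
    then show ?thesis unfolding form_b_def
    proof (elim disjE exE conjE)
      fix B \<alpha> \<beta> assume "B \<noteq> []" "0 < \<alpha>" "0 < \<beta>" "(\<alpha> + \<beta>) mod 3 = 0" "v = Uexp \<alpha> @ [S] @ B @ [S] @ Uexp \<beta>"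
      then show ?thesis by (intro blk)
    next
      fix \<gamma> assume "0 < \<gamma>" "\<gamma> mod 3 = 0" "v = Uexp \<gamma>"
      then show ?thesis by (intro gam)
    qed
  next
    assume "form_d v"
    then show ?thesis unfolding form_d_def by (elim exE conjE) (intro blk)
  next
    assume "form_e v"
    then show ?thesis unfolding form_e_def by (elim exE conjE) (intro blk)
  qed
qed


lemma classify:
  assumes v: "v = [U] @ B @ [U]" and ns: "nss v" and ev: "even (count_list v S)"
    and cU: "count_list v U mod 3 = 0"
  shows "form_b v \<or> form_d v \<or> form_e v"
proof (cases "S \<in> set v")
  case False
  then have "v = Uexp (length v)" by (rule noS)
  moreover have "length v = count_list v U" using length_count[of v] False by (simp add: count_list_0_iff)
  ultimately have vv: "v = Uexp (count_list v U)" by simp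
  have "count_list v U > 0" using v by simp
  then have "form_b v" unfolding form_b_def using cU vv by (intro disjI2 exI[where x="count_list v U"]) simp
  then show ?thesis by simp
next
  case True
  then obtain a r where ar: "v = Uexp a @ S # r" using decomp_left by blast
  have "count_list v S = Suc (count_list r S)" using ar by simp
  then have "count_list r S > 0" using ev by (metis even_Suc gr0I odd_pos)
  then have "S \<in> set r" using count_notin[of S r] by (cases "S \<in> set r") auto
  then obtain r' b where rb: "r = r' @ S # Uexp b" using decomp_right by blast
  have vv: "v = Uexp a @ [S] @ r' @ [S] @ Uexp b" using ar rb by simp
  have a0: "a > 0"
  proof (rule ccontr)
    assume "\<not> a > 0" then have "a = 0" by simp
    then show False using vv v by simp
  qed
  have b0: "b > 0"
  proof (rule ccontr)
    assume "\<not> b > 0" then have "b = 0" by simp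
    then have "last v = S" using vv by simp
    then show False using v by simp
  qed
  have r0: "r' \<noteq> []"
  proof
    assume "r' = []"
    then have "v = Uexp a @ S # S # Uexp b" using vv by simp
    then show False using ns by simp
  qed
  have "(a+b) mod 3 = 0 \<or> (a+b) mod 3 = 2 \<or> (a+b) mod 3 = 1" by presburger
  then show ?thesis
  proof (elim disjE)
    assume "(a+b) mod 3 = 0"
    then have "form_b v" unfolding form_b_def
      by (intro disjI1 exI[where x=r'] exI[where x=a] exI[where x=b] conjI r0 a0 b0 vv)
    then show ?thesis by simp
  next
    assume "(a+b) mod 3 = 2"
    then have "form_d v" unfolding form_d_def
      by (intro exI[where x=r'] exI[where x=a] exI[where x=b] conjI r0 a0 b0 vv)
    then show ?thesis by simp
  next
    assume "(a+b) mod 3 = 1"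
    then have "form_e v" unfolding form_e_def
      by (intro exI[where x=r'] exI[where x=a] exI[where x=b] conjI r0 a0 b0 vv)
    then show ?thesis by simp
  qed
qed

lemma sum_mod_unique:
  assumes "v = Uexp a @ [S] @ B @ [S] @ Uexp b" "v = Uexp a' @ [S] @ B' @ [S] @ Uexp b'"
  shows "a + b = a' + b'"
  using block_inj[of a B b a' B' b'] assms by simp

lemma S_in_block: "v = Uexp a @ [S] @ B @ [S] @ Uexp b \<Longrightarrow> S \<in> set v" by simp

lemma fb_shape: "form_b v \<Longrightarrow> S \<notin> set v \<or> (\<exists>a B b. v = Uexp a @ [S] @ B @ [S] @ Uexp b \<and> (a+b) mod 3 = 0)"
  unfolding form_b_def
proof (elim disjE exE conjE)
  fix B a b assume "B \<noteq> []" "0 < a" "0 < b" "(a + b) mod 3 = 0" "v = Uexp a @ [S] @ B @ [S] @ Uexp b"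
  then show ?thesis by (intro disjI2 exI[where x=a] exI[where x=B] exI[where x=b] conjI)
next
  fix g assume "0 < g" "g mod 3 = 0" "v = Uexp g"
  then show ?thesis using set_Uexp[of g] by simp
qed
lemma fd_shape: "form_d v \<Longrightarrow> (\<exists>a B b. v = Uexp a @ [S] @ B @ [S] @ Uexp b \<and> (a+b) mod 3 = 2)"
  unfolding form_d_def
proof (elim disjE exE conjE)
  fix B a b assume "B \<noteq> []" "0 < a" "0 < b" "(a + b) mod 3 = 2" "v = Uexp a @ [S] @ B @ [S] @ Uexp b"
  then show ?thesis by (intro exI[where x=a] exI[where x=B] exI[where x=b] conjI)
qed
lemma fe_shape: "form_e v \<Longrightarrow> (\<exists>a B b. v = Uexp a @ [S] @ B @ [S] @ Uexp b \<and> (a+b) mod 3 = 1)"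
  unfolding form_e_def
proof (elim disjE exE conjE)
  fix B a b assume "B \<noteq> []" "0 < a" "0 < b" "(a + b) mod 3 = 1" "v = Uexp a @ [S] @ B @ [S] @ Uexp b"
  then show ?thesis by (intro exI[where x=a] exI[where x=B] exI[where x=b] conjI)
qed

lemma disj_gen:
  assumes "S \<notin> set v \<or> (\<exists>a B b. v = Uexp a @ [S] @ B @ [S] @ Uexp b \<and> (a+b) mod 3 = i)"
    and "\<exists>a B b. v = Uexp a @ [S] @ B @ [S] @ Uexp b \<and> (a+b) mod 3 = j" and "i \<noteq> j"
  shows False
proof -
  from assms(2) obtain a B b where 1: "v = Uexp a @ [S] @ B @ [S] @ Uexp b" "(a+b) mod 3 = j"
    by (elim exE conjE) (rule that; assumption)
  from assms(1) show False
  proof (elim disjE exE conjE)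
    assume "S \<notin> set v" then show False using S_in_block[OF 1(1)] by simp
  next
    fix a' B' b' assume 2: "v = Uexp a' @ [S] @ B' @ [S] @ Uexp b'" "(a'+b') mod 3 = i"
    have "a + b = a' + b'" using sum_mod_unique[OF 1(1) 2(1)] .
    then have "i = j" using 1(2) 2(2) by metis
    then show False using assms(3) by simp
  qed
qed

lemma disj_bd: assumes "form_b v" "form_d v" shows False
  using disj_gen[OF fb_shape[OF assms(1)] fd_shape[OF assms(2)]] by simp
lemma disj_be: assumes "form_b v" "form_e v" shows False
  using disj_gen[OF fb_shape[OF assms(1)] fe_shape[OF assms(2)]] by simp
lemma disj_de: assumes "form_d v" "form_e v" shows False
  using disj_gen[OF disjI2[OF fd_shape[OF assms(1)]] fe_shape[OF assms(2)]] by simp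

lemma idA: "card (T form_a (3*n) (2*m+2)) = card (T form_b (3*n) (2*m)) + card (T form_d (3*n) (2*m)) + card (T form_e (3*n) (2*m))"
proof -
  let ?Tb = "T form_b (3*n) (2*m)" and ?Td = "T form_d (3*n) (2*m)" and ?Te = "T form_e (3*n) (2*m)"
  define g where "g = (\<lambda>v::letter list. [S] @ v @ [S])"
  have inj: "inj_on g (?Tb \<union> ?Td \<union> ?Te)" unfolding g_def by (rule inj_onI) simp
  have img: "g ` (?Tb \<union> ?Td \<union> ?Te) = T form_a (3*n) (2*m+2)"
  proof
    show "g ` (?Tb \<union> ?Td \<union> ?Te) \<subseteq> T form_a (3*n) (2*m+2)"
    proof
      fix w assume "w \<in> g ` (?Tb \<union> ?Td \<union> ?Te)"
      then obtain v where v: "v \<in> ?Tb \<union> ?Td \<union> ?Te" and w: "w = [S] @ v @ [S]" unfolding g_def by blast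
      have vp: "v \<noteq> []" "trivial_in_Gamma v" "nss v" "count_list v U = 3*n" "count_list v S = 2*m"
        "form_b v \<or> form_d v \<or> form_e v" using v by (auto simp: T_iff)
      obtain B' where B': "B' \<noteq> []" "v = [U] @ B' @ [U]" using bde_UU[OF vp(6)] by blast
      have "nss w" using nss_S_block[of v] vp B' w by simp
      moreover have "trivial_in_Gamma w" using triv_SS[of v] vp w by simp
      moreover have "form_a w" unfolding form_a_def using B' w by (intro exI[where x=B']) simp
      ultimately show "w \<in> T form_a (3*n) (2*m+2)" unfolding T_iff using w vp by simp
    qed
  next
    show "T form_a (3*n) (2*m+2) \<subseteq> g ` (?Tb \<union> ?Td \<union> ?Te)"
    proof
      fix w assume w: "w \<in> T form_a (3*n) (2*m+2)"
      then have wp: "trivial_in_Gamma w" "nss w" "count_list w U = 3*n" "count_list w S = 2*m+2" "form_a w"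
        by (auto simp: T_iff)
      then obtain B where B: "B \<noteq> []" "w = [S,U] @ B @ [U,S]" unfolding form_a_def by blast
      define v where "v = [U] @ B @ [U]"
      have wv: "w = [S] @ v @ [S]" using B unfolding v_def by simp
      have tv: "trivial_in_Gamma v" using triv_SS[of v] wp wv by simp
      have nv: "nss v" using nss_S_block[of v] wp wv by simp
      have cv: "count_list v U = 3*n" "count_list v S = 2*m" using wp wv by simp_all
      have fv: "form_b v \<or> form_d v \<or> form_e v"
        by (rule classify[OF v_def nv]) (use cv in simp_all)
      have vne: "v \<noteq> []" unfolding v_def by simp
      have "v \<in> ?Tb \<union> ?Td \<union> ?Te" using tv nv cv fv vne by (auto simp: T_iff)
      then show "w \<in> g ` (?Tb \<union> ?Td \<union> ?Te)" using wv unfolding g_def by blast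
    qed
  qed
  have d1: "?Tb \<inter> ?Td = {}" using disj_bd by (auto simp: T_iff)
  have d2: "(?Tb \<union> ?Td) \<inter> ?Te = {}" using disj_be disj_de by (auto simp: T_iff)
  have "card (T form_a (3*n) (2*m+2)) = card (?Tb \<union> ?Td \<union> ?Te)"
    using card_image[OF inj] img by simp
  also have "\<dots> = card (?Tb \<union> ?Td) + card ?Te"
    by (rule card_Un_disjoint) (simp_all add: finite_T d2)
  also have "card (?Tb \<union> ?Td) = card ?Tb + card ?Td"
    by (rule card_Un_disjoint) (simp_all add: finite_T d1)
  finally show ?thesis .
qed

lemma idB0: "n > 0 \<Longrightarrow> card (T form_b (3*n) 0) = 1"
proof -
  assume n: "n > 0"
  have "T form_b (3*n) 0 = {Uexp (3*n)}"
  proof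
    show "T form_b (3*n) 0 \<subseteq> {Uexp (3*n)}"
    proof
      fix w assume "w \<in> T form_b (3*n) 0"
      then have "count_list w S = 0" "count_list w U = 3*n" by (auto simp: T_iff)
      then have "S \<notin> set w" "length w = 3*n" using length_count[of w] by (simp_all add: count_list_0_iff)
      then show "w \<in> {Uexp (3*n)}" using noS[of w] by simp
    qed
  next
    have t: "trivial_in_Gamma (Uexp (3*n))" using triv_U3_right[of "[]" n] triv_Nil by simp
    have f: "form_b (Uexp (3*n))" unfolding form_b_def using n
      by (intro disjI2 exI[where x="3*n"]) simp
    show "{Uexp (3*n)} \<subseteq> T form_b (3*n) 0" using t f n by (simp add: T_iff)
  qed
  then show ?thesis by simp
qed




lemma cnt_c: "cnt P (3*int n) (2*int m) = card (T P (3*n) (2*m))"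
proof -
  have e1: "3*int n = int (3*n)" "2*int m = int (2*m)" by simp_all
  show ?thesis unfolding e1 by (rule cnt_T)
qed

lemma cnt_sub: "k \<le> n \<Longrightarrow> cnt P (3*int n - 3*int k) (2*int m) = card (T P (3*(n-k)) (2*m))"
proof -
  assume "k \<le> n"
  then obtain j where j: "n = k + j" using le_Suc_ex by blast
  then have e1: "3*int n - 3*int k = int (3*(n-k))" by simp
  have e2: "2*int m = int (2*m)" by simp
  show ?thesis unfolding e1 e2 by (rule cnt_T)
qed

lemma cnt_m2: "cnt P (3*int n) (2*int m - 2) = (if m = 0 then 0 else card (T P (3*n) (2*(m-1))))"
proof (cases m)
  case 0 then show ?thesis by (simp add: cnt_def)
next
  case (Suc m')
  then have e1: "2*int m - 2 = int (2*m')" by simp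
  have e2: "3*int n = int (3*n)" by simp
  show ?thesis unfolding e1 e2 using cnt_T[of P "3*n" "2*m'"] Suc by simp
qed

lemma Ta0: "T form_a N 0 = {}"
  by (auto simp: T_iff form_a_def)

lemma cs: "k \<in> {0..n} \<Longrightarrow> cnt P (3*int n - 3*int k) (2*int m) = card (T P (3*(n-k)) (2*m))"
   by (rule cnt_sub) simp
lemma cs1: "k \<in> {1..n} \<Longrightarrow> cnt P (3*int n - 3*int k) (2*int m) = card (T P (3*(n-k)) (2*m))"
   by (rule cnt_sub) simp

theorem proposition3:
  fixes n m :: nat
  shows
   "ca (3*int n) (2*int m) = cb (3*int n) (2*int m - 2) + cd (3*int n) (2*int m - 2)
                              + ce (3*int n) (2*int m - 2)
  \<and> (m \<ge> 1 \<longrightarrow> cb (3*int n) (2*int m) = (\<Sum>k\<in>{1..n}. (3*k - 1) * ca (3*int n - 3*int k) (2*int m)))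
  \<and> (n > 0 \<longrightarrow> cb (3*int n) 0 = 1)
  \<and> cc (3*int n) (2*int m) = 2 * (\<Sum>k\<in>{1..n}. ca (3*int n - 3*int k) (2*int m))
  \<and> cd (3*int n) (2*int m) = (\<Sum>k\<in>{0..n}. (3*k + 1) * cdfrak (3*int n - 3*int k) (2*int m))
  \<and> ce (3*int n) (2*int m) = (\<Sum>k\<in>{1..n}. 3*k * cffrak (3*int n - 3*int k) (2*int m))
  \<and> cf (3*int n) (2*int m) = 2 * (\<Sum>k\<in>{0..n}. cffrak (3*int n - 3*int k) (2*int m))
  \<and> cg (3*int n) (2*int m) = 2 * (\<Sum>k\<in>{0..n}. cdfrak (3*int n - 3*int k) (2*int m))"
proof (intro conjI impI)
  show "ca (3*int n) (2*int m) = cb (3*int n) (2*int m - 2) + cd (3*int n) (2*int m - 2)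
                              + ce (3*int n) (2*int m - 2)"
  proof (cases m)
    case 0
    have "ca (3*int n) (2*int m) = 0" unfolding ca_def cnt_c Ta0[of "3*n"] using 0 by (simp only: mult_0_right card.empty Ta0)
    moreover have "cb (3*int n) (2*int m - 2) = 0" "cd (3*int n) (2*int m - 2) = 0" "ce (3*int n) (2*int m - 2) = 0"
      unfolding cb_def cd_def ce_def cnt_m2 using 0 by simp_all
    ultimately show ?thesis by simp
  next
    case (Suc m')
    have e: "2*m = 2*m' + 2" using Suc by simp
    have "ca (3*int n) (2*int m) = card (T form_a (3*n) (2*m'+2))" unfolding ca_def cnt_c e by simp
    also have "\<dots> = card (T form_b (3*n) (2*m')) + card (T form_d (3*n) (2*m')) + card (T form_e (3*n) (2*m'))"
      by (rule idA[of n m'])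
    also have "\<dots> = cb (3*int n) (2*int m - 2) + cd (3*int n) (2*int m - 2) + ce (3*int n) (2*int m - 2)"
      unfolding cb_def cd_def ce_def cnt_m2 using Suc by simp
    finally show ?thesis .
  qed
next
  assume m: "m \<ge> 1"
  show "cb (3*int n) (2*int m) = (\<Sum>k\<in>{1..n}. (3*k - 1) * ca (3*int n - 3*int k) (2*int m))"
    unfolding cb_def ca_def cnt_c idB[OF m]
    by (rule sum.cong[OF refl]) (simp only: cs1)
next
  assume n: "n > 0"
  have "cb (3*int n) 0 = cnt form_b (int (3*n)) (int 0)" unfolding cb_def by simp
  also have "\<dots> = 1" unfolding cnt_T by (rule idB0[OF n])
  finally show "cb (3*int n) 0 = 1" .
next
  show "cc (3*int n) (2*int m) = 2 * (\<Sum>k\<in>{1..n}. ca (3*int n - 3*int k) (2*int m))"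
    unfolding cc_def ca_def cnt_c idC
    by (rule arg_cong[where f="\<lambda>x. 2 * x"], rule sum.cong[OF refl]) (simp only: cs1)
next
  show "cd (3*int n) (2*int m) = (\<Sum>k\<in>{0..n}. (3*k + 1) * cdfrak (3*int n - 3*int k) (2*int m))"
    unfolding cd_def cdfrak_def cnt_c idD
    by (rule sum.cong[OF refl]) (simp only: cs)
next
  show "ce (3*int n) (2*int m) = (\<Sum>k\<in>{1..n}. 3*k * cffrak (3*int n - 3*int k) (2*int m))"
    unfolding ce_def cffrak_def cnt_c idE
    by (rule sum.cong[OF refl]) (simp only: cs1)
next
  show "cf (3*int n) (2*int m) = 2 * (\<Sum>k\<in>{0..n}. cffrak (3*int n - 3*int k) (2*int m))"
    unfolding cf_def cffrak_def cnt_c idF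
    by (rule arg_cong[where f="\<lambda>x. 2 * x"], rule sum.cong[OF refl]) (simp only: cs)
next
  show "cg (3*int n) (2*int m) = 2 * (\<Sum>k\<in>{0..n}. cdfrak (3*int n - 3*int k) (2*int m))"
    unfolding cg_def cdfrak_def cnt_c idG
    by (rule arg_cong[where f="\<lambda>x. 2 * x"], rule sum.cong[OF refl]) (simp only: cs)
qed


end
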